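(* Let $\mathcal{X}_1,\mathcal{X}_2$ be non-empty sets, $\mathcal{B}_i\subseteq\mathcal{P}(\mathcal{X}_i)\setminus\{\emptyset\}$ for $i\in\{1,2\}$, and for each $i\in\{1,2\}$ let $\mathcal{B}'_i\supseteq\mathcal{B}_i$ be a set each of whose elements is a finite disjoint union of events in $\mathcal{B}_i$. Let $\mathcal{D}_i$ be a coherent set of desirable gambles on $\mathcal{X}_i$ and $\underline{P}_i$ a coherent conditional lower prevision on $\mathcal{C}_i\subseteq\mathcal{C}(\mathcal{X}_i)$, $i\in\{1,2\}$. Then the set $\mathcal{D}_1\otimes\mathcal{D}_2$ constructed from $(\mathcal{B}_1,\mathcal{B}_2)$ equals the one constructed from $(\mathcal{B}'_1,\mathcal{B}'_2)$, and likewise $\underline{P}_1\otimes\underline{P}_2$ constructed from $(\mathcal{B}_1,\mathcal{B}_2)$ equals the one constructed from $(\mathcal{B}'_1,\mathcal{B}'_2)$.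
   Context: Gambles on a non-empty set $\mathcal{X}$ are bounded real functions; $\mathcal{G}(\mathcal{X})$ is the set of gambles, $\mathcal{G}_{>0}(\mathcal{X})$ the non-negative non-zero gambles, $\mathbb{I}_A$ the indicator of $A$. For $\mathcal{A}\subseteq\mathcal{G}(\mathcal{X})$: $\mathrm{posi}(\mathcal{A}):=\{\sum_{i=1}^n\lambda_if_i\colon n\in\mathbb{N},\lambda_i>0,f_i\in\mathcal{A}\}$, $\mathcal{E}(\mathcal{A}):=\mathrm{posi}(\mathcal{A}\cup\mathcal{G}_{>0}(\mathcal{X}))$. A coherent set of desirable gambles $\mathcal{D}\subseteq\mathcal{G}(\mathcal{X})$ satisfies: (D1) $f\geq0,f\neq0\Rightarrow f\in\mathcal{D}$; (D2) $f\in\mathcal{D},\lambda>0\Rightarrow\lambda f\in\mathcal{D}$; (D3) $f,g\in\mathcal{D}\Rightarrow f+g\in\mathcal{D}$; (D4) $f\leq0\Rightarrow f\notin\mathcal{D}$. $\mathcal{C}(\mathcal{X}):=\mathcal{G}(\mathcal{X})\times(\mathcal{P}(\mathcal{X})\setminus\{\emptyset\})$; a conditional lower prevision on $\mathcal{C}\subseteq\mathcal{C}(\mathcal{X})$ is a map $(f,B)\mapsto\underline{P}(f\vert B)\in\mathbb{R}\cup\{\pm\infty\}$. For $\mathcal{D}\subseteq\mathcal{G}(\mathcal{X})$, $\underline{P}_{\mathcal{D}}(f\vert B):=\sup\{\mu\in\mathbb{R}\colon[f-\mu]\mathbb{I}_B\in\mathcal{D}\}$. $\underline{P}$ is coherent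 if $\underline{P}=\underline{P}_{\mathcal{D}}$ on its domain for some coherent set of desirable gambles $\mathcal{D}$. For coherent $\underline{P}$ on $\mathcal{C}$, $\mathcal{E}(\underline{P}):=\mathcal{E}(\{[f-\mu]\mathbb{I}_B\colon(f,B)\in\mathcal{C},\mu<\underline{P}(f\vert B)\})$. Gambles on $\mathcal{X}_i$ are identified with their cylindrical extensions to $\mathcal{X}_1\times\mathcal{X}_2$, events $B\subseteq\mathcal{X}_1$ with $B\times\mathcal{X}_2$ (similarly for $\mathcal{X}_2$). Given sets of conditioning events $\mathcal{B}_1,\mathcal{B}_2$: $\mathcal{D}_1\otimes\mathcal{D}_2:=\mathcal{E}(\mathcal{A}_{1\to2}\cup\mathcal{A}_{2\to1})$, with $\mathcal{A}_{1\to2}:=\{f_2(X_2)\mathbb{I}_{B_1}(X_1)\colon f_2\in\mathcal{D}_2,B_1\in\mathcal{B}_1\cup\{\mathcal{X}_1\}\}$ and $\mathcal{A}_{2\to1}:=\{f_1(X_1)\mathbb{I}_{B_2}(X_2)\colon f_1\in\mathcal{D}_1,B_2\in\mathcal{B}_2\cup\{\mathcal{X}_2\}\}$; and $(\underline{P}_1\otimes\underline{P}_2)(f\vert B):=\underline{P}_{\mathcal{D}}(f\vert B)$ for $(f,B)\in\mathcal{C}(\mathcal{X}_1\times\mathcal{X}_2)$ with $\mathcal{D}=\mathcal{E}(\underline{P}_1)\otimes\mathcal{E}(\underline{P}_2)$. *)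

theory Defs
  imports Main "HOL-Library.Extended_Real" "HOL-Library.Indicator_Function"
begin

definition gambles :: "('a \<Rightarrow> real) set" where
  "gambles = {f. \<exists>M. \<forall>x. \<bar>f x\<bar> \<le> M}"

definition gambles_pos :: "('a \<Rightarrow> real) set" where
  "gambles_pos = {f \<in> gambles. (\<forall>x. 0 \<le> f x) \<and> f \<noteq> (\<lambda>x. 0)}"

definition posi :: "('a \<Rightarrow> real) set \<Rightarrow> ('a \<Rightarrow> real) set" where
  "posi A = {g. \<exists>n::nat. \<exists>lam fs. n \<ge> 1 \<and> (\<forall>i<n. lam i > (0::real) \<and> fs i \<in> A)
                 \<and> g = (\<lambda>x. \<Sum>i<n. lam i * fs i x)}"

definition natext :: "('a \<Rightarrow> real) set \<Rightarrow> ('a \<Rightarrow> real) set" where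
  "natext A = posi (A \<union> gambles_pos)"

definition coherent_sdg :: "('a \<Rightarrow> real) set \<Rightarrow> bool" where
  "coherent_sdg D \<longleftrightarrow> D \<subseteq> gambles
     \<and> (\<forall>f \<in> gambles. (\<forall>x. 0 \<le> f x) \<and> f \<noteq> (\<lambda>x. 0) \<longrightarrow> f \<in> D)
     \<and> (\<forall>f \<in> D. \<forall>lam::real. lam > 0 \<longrightarrow> (\<lambda>x. lam * f x) \<in> D)
     \<and> (\<forall>f \<in> D. \<forall>g \<in> D. (\<lambda>x. f x + g x) \<in> D)
     \<and> (\<forall>f \<in> gambles. (\<forall>x. f x \<le> 0) \<longrightarrow> f \<notin> D)"

definition cond_domain :: "(('a \<Rightarrow> real) \<times> 'a set) set" where
  "cond_domain = gambles \<times> {B. B \<noteq> {}}"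

definition cgamble :: "('a \<Rightarrow> real) \<Rightarrow> real \<Rightarrow> 'a set \<Rightarrow> 'a \<Rightarrow> real" where
  "cgamble f mu B = (\<lambda>x. (f x - mu) * indicator B x)"

text \<open>P_D(f|B) = sup {mu. [f-mu] I_B \<in> D}, with sup of the empty set = -\<infinity>.\<close>
definition lpr_of :: "('a \<Rightarrow> real) set \<Rightarrow> ('a \<Rightarrow> real) \<Rightarrow> 'a set \<Rightarrow> ereal" where
  "lpr_of D f B = Sup {ereal mu | mu. cgamble f mu B \<in> D}"

definition coherent_clp :: "(('a \<Rightarrow> real) \<times> 'a set) set \<Rightarrow> (('a \<Rightarrow> real) \<Rightarrow> 'a set \<Rightarrow> ereal) \<Rightarrow> bool" where
  "coherent_clp C P \<longleftrightarrow> C \<subseteq> cond_domain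
     \<and> (\<exists>D. coherent_sdg D \<and> (\<forall>(f, B) \<in> C. P f B = lpr_of D f B))"

definition natext_lp :: "(('a \<Rightarrow> real) \<times> 'a set) set \<Rightarrow> (('a \<Rightarrow> real) \<Rightarrow> 'a set \<Rightarrow> ereal) \<Rightarrow> ('a \<Rightarrow> real) set" where
  "natext_lp C P = natext {cgamble f mu B | f mu B. (f, B) \<in> C \<and> ereal mu < P f B}"

definition tensor_sdg :: "'a set set \<Rightarrow> 'b set set \<Rightarrow> ('a \<Rightarrow> real) set \<Rightarrow> ('b \<Rightarrow> real) set
     \<Rightarrow> ('a \<times> 'b \<Rightarrow> real) set" where
  "tensor_sdg B1 B2 D1 D2 = natext
     ({(\<lambda>(x1, x2). f2 x2 * indicator E1 x1) | f2 E1. f2 \<in> D2 \<and> E1 \<in> B1 \<union> {UNIV}}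
      \<union> {(\<lambda>(x1, x2). f1 x1 * indicator E2 x2) | f1 E2. f1 \<in> D1 \<and> E2 \<in> B2 \<union> {UNIV}})"

definition tensor_lp :: "'a set set \<Rightarrow> 'b set set
     \<Rightarrow> (('a \<Rightarrow> real) \<times> 'a set) set \<Rightarrow> (('a \<Rightarrow> real) \<Rightarrow> 'a set \<Rightarrow> ereal)
     \<Rightarrow> (('b \<Rightarrow> real) \<times> 'b set) set \<Rightarrow> (('b \<Rightarrow> real) \<Rightarrow> 'b set \<Rightarrow> ereal)
     \<Rightarrow> ('a \<times> 'b \<Rightarrow> real) \<Rightarrow> ('a \<times> 'b) set \<Rightarrow> ereal" where
  "tensor_lp B1 B2 C1 P1 C2 P2 f B =
     lpr_of (tensor_sdg B1 B2 (natext_lp C1 P1) (natext_lp C2 P2)) f B"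

definition fin_disj_union_of :: "'a set set \<Rightarrow> 'a set \<Rightarrow> bool" where
  "fin_disj_union_of B E \<longleftrightarrow>
     (\<exists>S. finite S \<and> S \<noteq> {} \<and> S \<subseteq> B \<and> pairwise disjnt S \<and> E = \<Union>S)"

end

theory Submission
  imports Defs
begin

lemma posi_incl: "X \<subseteq> posi X"
proof
  fix g assume "g \<in> X"
  then show "g \<in> posi X" unfolding posi_def
    by (rule_tac CollectI, rule_tac x=1 in exI, rule_tac x="\<lambda>_. 1" in exI,
        rule_tac x="\<lambda>_. g" in exI) auto
qed

lemma posi_step:
  assumes "p \<in> posi X" "f \<in> X" "(c::real) > 0"
  shows "(\<lambda>x. p x + c * f x) \<in> posi X"
proof -
  from assms(1) obtain n :: nat and lam fs where h: "n \<ge> 1" "\<forall>i<n. lam i > (0::real) \<and> fs i \<in> X"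
    "p = (\<lambda>x. \<Sum>i<n. lam i * fs i x)" unfolding posi_def mem_Collect_eq by (elim exE conjE) (rule that; assumption)
  define lam' where "lam' = lam(n := c)"
  define fs' where "fs' = fs(n := f)"
  have "\<forall>i<Suc n. lam' i > 0 \<and> fs' i \<in> X" using h assms unfolding lam'_def fs'_def
    by (auto simp: less_Suc_eq)
  moreover have "(\<lambda>x. p x + c * f x) = (\<lambda>x. \<Sum>i<Suc n. lam' i * fs' i x)"
  proof
    fix x
    have "(\<Sum>i<n. lam' i * fs' i x) = (\<Sum>i<n. lam i * fs i x)"
      by (rule sum.cong) (auto simp: lam'_def fs'_def)
    then show "p x + c * f x = (\<Sum>i<Suc n. lam' i * fs' i x)"
      using h(3) by (simp add: lam'_def fs'_def)
  qed
  ultimately show ?thesis unfolding posi_def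
    by (rule_tac CollectI, rule_tac x="Suc n" in exI, rule_tac x=lam' in exI,
        rule_tac x=fs' in exI) auto
qed

lemma posi_add_aux:
  fixes m :: nat
  assumes "p \<in> posi X"
  shows "\<forall>mu gs. (\<forall>i<m. mu i > (0::real) \<and> gs i \<in> X) \<longrightarrow>
     (\<lambda>x. p x + (\<Sum>i<m. mu i * gs i x)) \<in> posi X"
proof (induction m)
  case 0 then show ?case using assms by simp
next
  case (Suc m)
  show ?case
  proof (intro allI impI)
    fix mu gs assume a: "\<forall>i<Suc m. mu i > (0::real) \<and> gs i \<in> X"
    then have "(\<lambda>x. p x + (\<Sum>i<m. mu i * gs i x)) \<in> posi X" using Suc by auto
    from posi_step[OF this, of "gs m" "mu m"] a
    show "(\<lambda>x. p x + (\<Sum>i<Suc m. mu i * gs i x)) \<in> posi X"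
      by (simp add: add.assoc)
  qed
qed

lemma posi_add:
  assumes "p \<in> posi X" "q \<in> posi X"
  shows "(\<lambda>x. p x + q x) \<in> posi X"
proof -
  from assms(2) obtain n :: nat and lam fs where h: "\<forall>i<n. lam i > (0::real) \<and> fs i \<in> X"
    "q = (\<lambda>x. \<Sum>i<n. lam i * fs i x)" unfolding posi_def mem_Collect_eq by (elim exE conjE) (rule that; assumption)
  show ?thesis using posi_add_aux[OF assms(1), of n] h by auto
qed

lemma posi_scale:
  assumes "p \<in> posi X" "(c::real) > 0"
  shows "(\<lambda>x. c * p x) \<in> posi X"
proof -
  from assms(1) obtain n :: nat and lam fs where h: "n \<ge> 1" "\<forall>i<n. lam i > (0::real) \<and> fs i \<in> X"
    "p = (\<lambda>x. \<Sum>i<n. lam i * fs i x)" unfolding posi_def mem_Collect_eq by (elim exE conjE) (rule that; assumption)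
  have "(\<lambda>x. c * p x) = (\<lambda>x. \<Sum>i<n. (c * lam i) * fs i x)"
    using h(3) by (simp add: sum_distrib_left mult.assoc)
  moreover have "\<forall>i<n. c * lam i > 0 \<and> fs i \<in> X" using h(2) assms(2) by simp
  ultimately show ?thesis using h(1) unfolding posi_def
    by (rule_tac CollectI, rule_tac x="n" in exI, rule_tac x="\<lambda>i. c * lam i" in exI,
        rule_tac x=fs in exI) auto
qed

lemma posi_least:
  assumes "X \<subseteq> Y" "\<And>p c. p \<in> Y \<Longrightarrow> (c::real) > 0 \<Longrightarrow> (\<lambda>x. c * p x) \<in> Y"
    "\<And>p q. p \<in> Y \<Longrightarrow> q \<in> Y \<Longrightarrow> (\<lambda>x. p x + q x) \<in> Y"
  shows "posi X \<subseteq> Y"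
proof
  fix g assume "g \<in> posi X"
  then obtain n :: nat and lam fs where h: "n \<ge> 1" "\<forall>i<n. lam i > (0::real) \<and> fs i \<in> X"
    "g = (\<lambda>x. \<Sum>i<n. lam i * fs i x)" unfolding posi_def mem_Collect_eq by (elim exE conjE) (rule that; assumption)
  have "(\<forall>i<n. lam i > (0::real) \<and> fs i \<in> X) \<longrightarrow> n \<ge> 1 \<longrightarrow> (\<lambda>x. \<Sum>i<n. lam i * fs i x) \<in> Y"
  proof (induction n)
    case 0 then show ?case by simp
  next
    case (Suc n)
    show ?case
    proof (intro impI)
      assume a: "\<forall>i<Suc n. lam i > (0::real) \<and> fs i \<in> X"
      have t: "(\<lambda>x. lam n * fs n x) \<in> Y" using a assms(1,2) by auto
      show "(\<lambda>x. \<Sum>i<Suc n. lam i * fs i x) \<in> Y"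
      proof (cases "n = 0")
        case True then show ?thesis using t by simp
      next
        case False
        then have "(\<lambda>x. \<Sum>i<n. lam i * fs i x) \<in> Y" using Suc a by auto
        from assms(3)[OF this t] show ?thesis by simp
      qed
    qed
  qed
  then show "g \<in> Y" using h by auto
qed

lemma posi_idem: "posi (posi X) = posi X"
  using posi_least[of "posi X" "posi X"] posi_scale posi_add posi_incl by blast

lemma posi_mono: "X \<subseteq> Y \<Longrightarrow> posi X \<subseteq> posi Y"
  unfolding posi_def by blast

lemma natext_eq:
  assumes "A \<subseteq> A'" "A' \<subseteq> posi A"
  shows "natext A = natext A'"
proof
  show "natext A \<subseteq> natext A'" unfolding natext_def using assms(1) posi_mono
    by (metis Un_mono order_refl)
  have "A' \<union> gambles_pos \<subseteq> posi (A \<union> gambles_pos)"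
    using assms(2) posi_mono[of A "A \<union> gambles_pos"] posi_incl[of "A \<union> gambles_pos"] by blast
  then show "natext A' \<subseteq> natext A" unfolding natext_def
    using posi_mono posi_idem by metis
qed

lemma indicator_disj_Un:
  assumes "disjnt E F"
  shows "indicator (E \<union> F) x = (indicator E x + indicator F x :: real)"
  using assms by (auto simp: indicator_def disjnt_def)

lemma disj_union_posi:
  assumes "finite S" "S \<noteq> {}" "pairwise disjnt S"
    "\<forall>E\<in>S. (\<lambda>z. f z * indicator E (g z)) \<in> posi A"
  shows "(\<lambda>z. f z * indicator (\<Union>S) (g z)) \<in> posi A"
  using assms
proof (induction S rule: finite_ne_induct)
  case (singleton x) then show ?case by simp
next
  case (insert E S)
  have d: "disjnt E (\<Union>S)" using insert.prems(1) insert.hyps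
    by (auto simp: pairwise_def disjnt_def)
  have p: "pairwise disjnt S" using insert.prems(1) by (auto simp: pairwise_def)
  have "(\<lambda>z. f z * indicator (\<Union>S) (g z)) \<in> posi A" using insert p by auto
  from posi_add[OF _ this, of "\<lambda>z. f z * indicator E (g z)"] insert.prems(2)
  have "(\<lambda>z. f z * indicator E (g z) + f z * indicator (\<Union>S) (g z)) \<in> posi A" by auto
  then show ?case using indicator_disj_Un[OF d] by (simp add: distrib_left)
qed

lemma tensor_eq:
  assumes "B1 \<subseteq> B1'" "\<forall>E \<in> B1'. fin_disj_union_of B1 E"
    and "B2 \<subseteq> B2'" "\<forall>E \<in> B2'. fin_disj_union_of B2 E"
  shows "tensor_sdg B1 B2 D1 D2 = tensor_sdg B1' B2' D1 D2"
proof -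
  let ?A = "{(\<lambda>(x1, x2). f2 x2 * indicator E1 x1) | f2 E1. f2 \<in> D2 \<and> E1 \<in> B1 \<union> {UNIV}}
      \<union> {(\<lambda>(x1, x2). f1 x1 * indicator E2 x2) | f1 E2. f1 \<in> D1 \<and> E2 \<in> B2 \<union> {UNIV}}"
  let ?A' = "{(\<lambda>(x1, x2). f2 x2 * indicator E1 x1) | f2 E1. f2 \<in> D2 \<and> E1 \<in> B1' \<union> {UNIV}}
      \<union> {(\<lambda>(x1, x2). f1 x1 * indicator E2 x2) | f1 E2. f1 \<in> D1 \<and> E2 \<in> B2' \<union> {UNIV}}"
  have sub: "?A \<subseteq> ?A'" using assms(1,3) by (intro Un_mono Collect_mono) blast+
  have "?A' \<subseteq> posi ?A"
  proof
    fix h assume "h \<in> ?A'"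
    then consider (a') "h \<in> {(\<lambda>(x1, x2). f2 x2 * indicator E1 x1) | f2 E1. f2 \<in> D2 \<and> E1 \<in> B1' \<union> {UNIV}}"
      | (b') "h \<in> {(\<lambda>(x1, x2). f1 x1 * indicator E2 x2) | f1 E2. f1 \<in> D1 \<and> E2 \<in> B2' \<union> {UNIV}}"
      by (rule UnE)
    then show "h \<in> posi ?A"
    proof cases
      case a'
      then obtain f2 E1 where a: "f2 \<in> D2" "E1 \<in> B1' \<union> {UNIV}" "h = (\<lambda>(x1, x2). f2 x2 * indicator E1 x1)"
        using a' unfolding mem_Collect_eq by (elim exE conjE) (rule that; assumption)
      show ?thesis
      proof (cases "E1 = UNIV")
        case True
        have "h \<in> ?A" unfolding a(3) True by (intro UnI1 CollectI exI[of _ f2] exI[of _ UNIV]) (simp add: a(1))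
        then show ?thesis by (rule subsetD[OF posi_incl])
      next
        case False
        then obtain S where S: "finite S" "S \<noteq> {}" "S \<subseteq> B1" "pairwise disjnt S" "E1 = \<Union>S"
        proof -
          have "E1 \<in> B1'" using a(2) False by simp
          then have "fin_disj_union_of B1 E1" using assms(2) by simp
          then show ?thesis unfolding fin_disj_union_of_def by (elim exE conjE) (rule that; assumption)
        qed
        have eq: "\<And>E. (\<lambda>(x1, x2). f2 x2 * indicator E x1) = (\<lambda>z. f2 (snd z) * indicator E (fst z))"
          by auto
        have "\<forall>E\<in>S. (\<lambda>z. f2 (snd z) * indicator E (fst z)) \<in> posi ?A"
        proof
          fix E assume "E \<in> S"
          then have "(\<lambda>(x1, x2). f2 x2 * indicator E x1) \<in> ?A" using S(3) a(1) \<open>E \<in> S\<close> by (intro UnI1 CollectI exI[of _ f2] exI[of _ E]) auto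
          then show "(\<lambda>z. f2 (snd z) * indicator E (fst z)) \<in> posi ?A"
            unfolding eq[symmetric] by (rule subsetD[OF posi_incl])
        qed
        from disj_union_posi[OF S(1,2,4) this] show ?thesis by (simp only: a(3) S(5) eq)
      qed
    next
      case b'
      then obtain f1 E2 where b: "f1 \<in> D1" "E2 \<in> B2' \<union> {UNIV}" "h = (\<lambda>(x1, x2). f1 x1 * indicator E2 x2)"
        using b' unfolding mem_Collect_eq by (elim exE conjE) (rule that; assumption)
      show ?thesis
      proof (cases "E2 = UNIV")
        case True
        have "h \<in> ?A" unfolding b(3) True by (intro UnI2 CollectI exI[of _ f1] exI[of _ UNIV]) (simp add: b(1))
        then show ?thesis by (rule subsetD[OF posi_incl])
      next
        case False
        then obtain S where S: "finite S" "S \<noteq> {}" "S \<subseteq> B2" "pairwise disjnt S" "E2 = \<Union>S"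
        proof -
          have "E2 \<in> B2'" using b(2) False by simp
          then have "fin_disj_union_of B2 E2" using assms(4) by simp
          then show ?thesis unfolding fin_disj_union_of_def by (elim exE conjE) (rule that; assumption)
        qed
        have eq: "\<And>E. (\<lambda>(x1, x2). f1 x1 * indicator E x2) = (\<lambda>z. f1 (fst z) * indicator E (snd z))"
          by auto
        have "\<forall>E\<in>S. (\<lambda>z. f1 (fst z) * indicator E (snd z)) \<in> posi ?A"
        proof
          fix E assume "E \<in> S"
          then have "(\<lambda>(x1, x2). f1 x1 * indicator E x2) \<in> ?A" using S(3) b(1) \<open>E \<in> S\<close> by (intro UnI2 CollectI exI[of _ f1] exI[of _ E]) auto
          then show "(\<lambda>z. f1 (fst z) * indicator E (snd z)) \<in> posi ?A"
            unfolding eq[symmetric] by (rule subsetD[OF posi_incl])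
        qed
        from disj_union_posi[OF S(1,2,4) this] show ?thesis by (simp only: b(3) S(5) eq)
      qed
    qed
  qed
  from natext_eq[OF sub this] show ?thesis unfolding tensor_sdg_def .
qed

theorem proposition20:
  fixes B1 B1' :: "'a set set" and B2 B2' :: "'b set set"
    and D1 :: "('a \<Rightarrow> real) set" and D2 :: "('b \<Rightarrow> real) set"
    and C1 :: "(('a \<Rightarrow> real) \<times> 'a set) set" and P1 :: "('a \<Rightarrow> real) \<Rightarrow> 'a set \<Rightarrow> ereal"
    and C2 :: "(('b \<Rightarrow> real) \<times> 'b set) set" and P2 :: "('b \<Rightarrow> real) \<Rightarrow> 'b set \<Rightarrow> ereal"
  assumes "B1 \<subseteq> Pow UNIV - {{}}" and "B2 \<subseteq> Pow UNIV - {{}}"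
    and "B1 \<subseteq> B1'" and "\<forall>E \<in> B1'. fin_disj_union_of B1 E"
    and "B2 \<subseteq> B2'" and "\<forall>E \<in> B2'. fin_disj_union_of B2 E"
    and "coherent_sdg D1" and "coherent_sdg D2"
    and "coherent_clp C1 P1" and "coherent_clp C2 P2"
  shows "tensor_sdg B1 B2 D1 D2 = tensor_sdg B1' B2' D1 D2
    \<and> (\<forall>(f, B) \<in> cond_domain. tensor_lp B1 B2 C1 P1 C2 P2 f B = tensor_lp B1' B2' C1 P1 C2 P2 f B)"
  using tensor_eq[OF assms(3-6)] unfolding tensor_lp_def by simp

end
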